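(* Let $\bm{L}\in\mathbb{R}^{m\times n}$ have rank $r$ and compact SVD $\bm{L}=\bm{W}_{\bm{L}}\bm{\Sigma}_{\bm{L}}\bm{V}_{\bm{L}}^T$, and suppose $\bm{L}$ is $\{\mu_1(\bm{L}),\mu_2(\bm{L})\}$-incoherent, i.e. \[\max_{i}\|\bm{W}_{\bm{L}}^T\bm{e}_i\|_2\leq\sqrt{\tfrac{\mu_1(\bm{L}) r}{m}}\quad\text{and}\quad\max_{i}\|\bm{V}_{\bm{L}}^T\bm{e}_i\|_2\leq\sqrt{\tfrac{\mu_2(\bm{L}) r}{n}}.\] Let $J\subseteq[n]$ be such that $\bm{C}=\bm{L}(:,J)\in\mathbb{R}^{m\times|J|}$ has rank $r$, let $\bm{C}=\bm{W}_{\bm{C}}\bm{\Sigma}_{\bm{C}}\bm{V}_{\bm{C}}^T$ be its compact SVD, and set $\beta:=\sqrt{\frac{|J|}{n}}\,\|\bm{V}_{\bm{L}}(J,:)^\dagger\|_2$. Then \begin{enumerate} \item $\max_i\|\bm{W}_{\bm{C}}^T\bm{e}_i\|_2\leq\sqrt{\frac{\mu_1(\bm{L}) r}{m}}$, \item $\max_i\|\bm{V}_{\bm{C}}^T\bm{e}_i\|_2\leq\beta\,\kappa(\bm{L})\sqrt{\frac{\mu_2(\bm{L}) r}{|J|}}$, \item $\kappa(\bm{C})\leq\beta\sqrt{\mu_2(\bm{L}) r}\,\kappa(\bm{L})$. \end{enumerate} In particular, $\bm{C}$ satisfies the incoherence inequalities with parameters $\mu_1(\bm{C})\leq\mu_1(\bm{L})$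 and $\mu_2(\bm{C})\leq\beta^2\kappa(\bm{L})^2\mu_2(\bm{L})$ (where for $\bm{C}$ the dimensions $m,n$ in the incoherence inequalities are replaced by $m,|J|$).
   Context: $[n]=\{1,\dots,n\}$. For a matrix $\bm{A}$, $\bm{A}(I,J)$ denotes the submatrix with row indices $I$ and column indices $J$ (":" meaning all indices), $\bm{A}^\dagger$ is the Moore–Penrose pseudoinverse, and $\kappa(\bm{A})=\|\bm{A}\|_2\|\bm{A}^\dagger\|_2=\sigma_{\max}(\bm{A})/\sigma_{\min}(\bm{A})$, with $\sigma_{\min}$ the smallest nonzero singular value. $\bm{e}_i$ is the $i$-th canonical basis vector of the appropriate dimension. A rank-$r$ matrix $\bm{A}\in\mathbb{R}^{p\times q}$ with compact SVD $\bm{W}_{\bm{A}}\bm{\Sigma}_{\bm{A}}\bm{V}_{\bm{A}}^T$ is called $\{\mu_1,\mu_2\}$-incoherent if $\max_i\|\bm{W}_{\bm{A}}^T\bm{e}_i\|_2\le\sqrt{\mu_1 r/p}$ and $\max_i\|\bm{V}_{\bm{A}}^T\bm{e}_i\|_2\le\sqrt{\mu_2 r/q}$. *)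

theory Defs
  imports Complex_Main "Jordan_Normal_Form.DL_Rank_Submatrix"
begin

definition vnorm :: "real vec \<Rightarrow> real" where
  "vnorm v = sqrt (\<Sum>i<dim_vec v. (v $ i)^2)"

text \<open>Spectral norm (operator 2-norm); the 0 is inserted only so that the
  supremum is also well defined for matrices with no columns.\<close>
definition spec_norm :: "real mat \<Rightarrow> real" where
  "spec_norm A = Sup (insert 0 {vnorm (A *\<^sub>v x) | x. x \<in> carrier_vec (dim_col A) \<and> vnorm x = 1})"

definition pinv :: "real mat \<Rightarrow> real mat" where
  "pinv A = (THE X. X \<in> carrier_mat (dim_col A) (dim_row A) \<and>
      A * X * A = A \<and> X * A * X = X \<and>
      transpose_mat (A * X) = A * X \<and> transpose_mat (X * A) = X * A)"

definition cond_num :: "real mat \<Rightarrow> real" where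
  "cond_num A = spec_norm A * spec_norm (pinv A)"

definition compact_svd :: "real mat \<Rightarrow> nat \<Rightarrow> real mat \<Rightarrow> real mat \<Rightarrow> real mat \<Rightarrow> bool" where
  "compact_svd A r W S V \<longleftrightarrow>
     W \<in> carrier_mat (dim_row A) r \<and> S \<in> carrier_mat r r \<and> V \<in> carrier_mat (dim_col A) r \<and>
     transpose_mat W * W = 1\<^sub>m r \<and> transpose_mat V * V = 1\<^sub>m r \<and>
     diagonal_mat S \<and> (\<forall>i<r. 0 < S $$ (i,i)) \<and>
     (\<forall>i j. i \<le> j \<longrightarrow> j < r \<longrightarrow> S $$ (j,j) \<le> S $$ (i,i)) \<and>
     A = W * S * transpose_mat V"

end

theory Submission
  imports Defs "HOL-Analysis.L2_Norm"
begin


lemma vnorm_L2: "vnorm v = L2_set (\<lambda>i. v $ i) {..<dim_vec v}"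
  unfolding vnorm_def L2_set_def by simp

lemma vnorm_nonneg[simp]: "0 \<le> vnorm v"
  unfolding vnorm_def by (simp add: sum_nonneg)

lemma vnorm_sq: "(vnorm v)^2 = v \<bullet> v"
  unfolding vnorm_def scalar_prod_def
  by (simp add: sum_nonneg power2_eq_square atLeast0LessThan)

lemma cs_vec: assumes "dim_vec v = dim_vec w" shows "\<bar>v \<bullet> w\<bar> \<le> vnorm v * vnorm w"
proof -
  have "\<bar>v \<bullet> w\<bar> \<le> (\<Sum>i<dim_vec w. \<bar>v $ i\<bar> * \<bar>w $ i\<bar>)"
    unfolding scalar_prod_def atLeast0LessThan
    by (rule order_trans[OF sum_abs]) (simp add: abs_mult)
  also have "\<dots> \<le> vnorm v * vnorm w"
    unfolding vnorm_L2 assms by (rule L2_set_mult_ineq)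
  finally show ?thesis .
qed

lemma vnorm_smult: "vnorm (a \<cdot>\<^sub>v v) = \<bar>a\<bar> * vnorm v"
proof -
  have "vnorm (a \<cdot>\<^sub>v v) = sqrt (a^2 * (\<Sum>i<dim_vec v. (v $ i)^2))"
    unfolding vnorm_def by (simp add: power_mult_distrib sum_distrib_left)
  thus ?thesis unfolding vnorm_def by (simp add: real_sqrt_mult)
qed

lemma vnorm_eq_iff: "vnorm v = vnorm w \<longleftrightarrow> v \<bullet> v = w \<bullet> w"
  by (metis vnorm_sq vnorm_nonneg power2_eq_imp_eq)

definition frob2 :: "real mat \<Rightarrow> real" where
  "frob2 A = (\<Sum>i<dim_row A. (vnorm (row A i))^2)"

lemma frob2_nonneg: "0 \<le> frob2 A" unfolding frob2_def by (simp add: sum_nonneg)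

lemma vnorm_mult_sq: assumes "x \<in> carrier_vec (dim_col A)"
  shows "(vnorm (A *\<^sub>v x))^2 \<le> frob2 A * (vnorm x)^2"
proof -
  have "(vnorm (A *\<^sub>v x))^2 = (\<Sum>i<dim_row A. (row A i \<bullet> x)^2)"
    unfolding vnorm_def by (simp add: sum_nonneg)
  also have "\<dots> \<le> (\<Sum>i<dim_row A. (vnorm (row A i))^2 * (vnorm x)^2)"
  proof (rule sum_mono)
    fix i assume "i \<in> {..<dim_row A}"
    have "\<bar>row A i \<bullet> x\<bar> \<le> vnorm (row A i) * vnorm x" using assms by (intro cs_vec) auto
    hence "\<bar>row A i \<bullet> x\<bar>^2 \<le> (vnorm (row A i) * vnorm x)^2"
      by (intro power_mono) auto
    thus "(row A i \<bullet> x)^2 \<le> (vnorm (row A i))^2 * (vnorm x)^2" by (simp add: power_mult_distrib)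
  qed
  also have "\<dots> = frob2 A * (vnorm x)^2" unfolding frob2_def by (simp add: sum_distrib_right)
  finally show ?thesis .
qed

lemma vnorm_mult_le: assumes "x \<in> carrier_vec (dim_col A)"
  shows "vnorm (A *\<^sub>v x) \<le> sqrt (frob2 A) * vnorm x"
proof -
  have "sqrt ((vnorm (A *\<^sub>v x))^2) \<le> sqrt (frob2 A * (vnorm x)^2)"
    using vnorm_mult_sq[OF assms] by (rule real_sqrt_le_mono)
  thus ?thesis by (simp add: real_sqrt_mult)
qed

lemma spec_bdd: "bdd_above (insert 0 {vnorm (A *\<^sub>v x) | x. x \<in> carrier_vec (dim_col A) \<and> vnorm x = 1})"
  unfolding bdd_above_def
  by (rule exI[of _ "sqrt (frob2 A)"]) (auto simp: frob2_nonneg dest: vnorm_mult_le[of _ A])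

lemma spec_norm_nonneg: "0 \<le> spec_norm A"
  unfolding spec_norm_def by (rule cSup_upper[OF _ spec_bdd]) simp

lemma spec_norm_unit: "x \<in> carrier_vec (dim_col A) \<Longrightarrow> vnorm x = 1 \<Longrightarrow> vnorm (A *\<^sub>v x) \<le> spec_norm A"
  unfolding spec_norm_def by (rule cSup_upper[OF _ spec_bdd]) auto

lemma vnorm_zero_iff: "vnorm x = 0 \<longleftrightarrow> x = 0\<^sub>v (dim_vec x)"
proof
  assume "vnorm x = 0"
  hence "(\<Sum>i<dim_vec x. (x $ i)^2) = 0" unfolding vnorm_def by simp
  hence "\<forall>i\<in>{..<dim_vec x}. (x $ i)^2 = 0" by (subst (asm) sum_nonneg_eq_0_iff) auto
  thus "x = 0\<^sub>v (dim_vec x)" by (intro eq_vecI) auto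
next
  assume "x = 0\<^sub>v (dim_vec x)"
  hence "\<And>i. i < dim_vec x \<Longrightarrow> x $ i = 0" by (metis index_zero_vec(1))
  thus "vnorm x = 0" by (simp add: vnorm_def)
qed

lemma spec_norm_le: assumes x: "x \<in> carrier_vec (dim_col A)"
  shows "vnorm (A *\<^sub>v x) \<le> spec_norm A * vnorm x"
proof (cases "vnorm x = 0")
  case True
  hence "x = 0\<^sub>v (dim_col A)" using x vnorm_zero_iff by auto
  hence "A *\<^sub>v x = 0\<^sub>v (dim_row A)" by auto
  thus ?thesis using True by (simp add: vnorm_def)
next
  case False
  hence pos: "vnorm x > 0" using vnorm_nonneg[of x] by linarith
  let ?y = "(1 / vnorm x) \<cdot>\<^sub>v x"
  have y: "?y \<in> carrier_vec (dim_col A)" "vnorm ?y = 1" using x pos by (auto simp: vnorm_smult)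
  have "vnorm (A *\<^sub>v ?y) = vnorm (A *\<^sub>v x) / vnorm x"
    using x pos by (subst mult_mat_vec[of _ "dim_row A" "dim_col A"]) (auto simp: vnorm_smult)
  with spec_norm_unit[OF y] pos show ?thesis by (simp add: divide_le_eq mult.commute)
qed

lemma spec_norm_leI: assumes "0 \<le> c" "\<And>x. x \<in> carrier_vec (dim_col A) \<Longrightarrow> vnorm (A *\<^sub>v x) \<le> c * vnorm x"
  shows "spec_norm A \<le> c"
  unfolding spec_norm_def using assms apply (intro cSup_least) apply auto by (metis mult.right_neutral)




lemma orth_vnorm: assumes W: "W \<in> carrier_mat k r" and WW: "transpose_mat W * W = 1\<^sub>m r"
  and x: "x \<in> carrier_vec r"
  shows "vnorm (W *\<^sub>v x) = vnorm x"
proof -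
  have "(W *\<^sub>v x) \<bullet> (W *\<^sub>v x) = (transpose_mat W *\<^sub>v (W *\<^sub>v x)) \<bullet> x"
    using transpose_vec_mult_scalar[OF W x, of "W *\<^sub>v x"] W x by simp
  also have "transpose_mat W *\<^sub>v (W *\<^sub>v x) = x"
    using assoc_mult_mat_vec[of "transpose_mat W" r k W r x] W x WW by simp
  finally show ?thesis unfolding vnorm_eq_iff .
qed

lemma orth_T_le: assumes W: "W \<in> carrier_mat k r" and WW: "transpose_mat W * W = 1\<^sub>m r"
  and y: "y \<in> carrier_vec k"
  shows "vnorm (transpose_mat W *\<^sub>v y) \<le> vnorm y"
proof -
  let ?z = "transpose_mat W *\<^sub>v y"
  have z: "?z \<in> carrier_vec r" using W y by simp
  have "(vnorm ?z)^2 = ?z \<bullet> ?z" by (rule vnorm_sq)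
  also have "\<dots> = y \<bullet> (W *\<^sub>v ?z)" by (rule transpose_vec_mult_scalar[OF W z y])
  also have "\<dots> \<le> vnorm y * vnorm (W *\<^sub>v ?z)" using cs_vec[of y "W *\<^sub>v ?z"] W y by auto
  also have "vnorm (W *\<^sub>v ?z) = vnorm ?z" by (rule orth_vnorm[OF W WW z])
  finally have "vnorm ?z * vnorm ?z \<le> vnorm y * vnorm ?z" by (simp add: power2_eq_square)
  thus ?thesis using vnorm_nonneg[of ?z] vnorm_nonneg[of y]
  proof (cases "vnorm ?z = 0")
    case False
    hence "0 < vnorm ?z" using vnorm_nonneg[of ?z] by linarith
    with \<open>vnorm ?z * vnorm ?z \<le> vnorm y * vnorm ?z\<close> show ?thesis by (rule mult_right_le_imp_le)
  qed simp
qed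

definition penrose :: "real mat \<Rightarrow> real mat \<Rightarrow> bool" where
  "penrose A X \<longleftrightarrow> X \<in> carrier_mat (dim_col A) (dim_row A) \<and>
      A * X * A = A \<and> X * A * X = X \<and>
      transpose_mat (A * X) = A * X \<and> transpose_mat (X * A) = X * A"

lemma penrose_unique: assumes A: "A \<in> carrier_mat a b" and X: "penrose A X" and Y: "penrose A Y"
  shows "X = Y"
proof -
  have Xc: "X \<in> carrier_mat b a" and Yc: "Y \<in> carrier_mat b a"
    using X Y A unfolding penrose_def by auto
  have XT: "transpose_mat X \<in> carrier_mat a b" and AT: "transpose_mat A \<in> carrier_mat b a"
    and YT: "transpose_mat Y \<in> carrier_mat a b" using A Xc Yc by auto
  note c = A Xc Yc XT AT YT
  have X1: "A * X * A = A" "X * A * X = X" "transpose_mat (A * X) = A * X" "transpose_mat (X * A) = X * A"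
    using X unfolding penrose_def by auto
  have Y1: "A * Y * A = A" "Y * A * Y = Y" "transpose_mat (A * Y) = A * Y" "transpose_mat (Y * A) = Y * A"
    using Y unfolding penrose_def by auto
  have AT1: "transpose_mat A = transpose_mat A * (A * Y)"
  proof -
    have "transpose_mat A = transpose_mat ((A * Y) * A)" using Y1 by simp
    also have "\<dots> = transpose_mat A * transpose_mat (A * Y)" using c by (metis transpose_mult mult_carrier_mat)
    finally show ?thesis using Y1 by simp
  qed
  have AT2: "transpose_mat A = (X * A) * transpose_mat A"
  proof -
    have "transpose_mat A = transpose_mat (A * (X * A))" using X1 c by simp
    also have "\<dots> = transpose_mat (X * A) * transpose_mat A" using c by (metis transpose_mult mult_carrier_mat)
    finally show ?thesis using X1 by simp
  qed
  have XTAT: "transpose_mat X * transpose_mat A = A * X" using X1 c by (metis transpose_mult)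
  have ATYT: "transpose_mat A * transpose_mat Y = Y * A" using Y1 c by (metis transpose_mult)
  have "X = X * (A * X)" using X1 c by simp
  also have "\<dots> = X * (transpose_mat X * transpose_mat A)" using XTAT by simp
  also have "\<dots> = X * (transpose_mat X * (transpose_mat A * (A * Y)))" using AT1 by simp
  also have "\<dots> = X * ((transpose_mat X * transpose_mat A) * (A * Y))"
    by (subst assoc_mult_mat[OF XT AT mult_carrier_mat[OF A Yc]]) simp
  also have "\<dots> = X * ((A * X) * (A * Y))" using XTAT by simp
  also have "\<dots> = X * (A * (X * (A * Y)))"
    by (subst assoc_mult_mat[OF A Xc mult_carrier_mat[OF A Yc]]) simp
  also have "\<dots> = (X * A) * (X * (A * Y))"
    by (subst assoc_mult_mat[OF Xc A mult_carrier_mat[OF Xc mult_carrier_mat[OF A Yc]]]) simp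
  also have "\<dots> = (X * A * X) * (A * Y)"
    by (subst assoc_mult_mat[OF mult_carrier_mat[OF Xc A] Xc mult_carrier_mat[OF A Yc]]) simp
  also have "\<dots> = X * (A * Y)" using X1 by simp
  also have "\<dots> = X * A * Y" by (subst assoc_mult_mat[OF Xc A Yc]) simp
  finally have eq1: "X = X * A * Y" .
  have "Y = (Y * A) * Y" using Y1 c by simp
  also have "\<dots> = (transpose_mat A * transpose_mat Y) * Y" using ATYT by simp
  also have "\<dots> = (((X * A) * transpose_mat A) * transpose_mat Y) * Y" using AT2 by simp
  also have "\<dots> = ((X * A) * (transpose_mat A * transpose_mat Y)) * Y"
    by (subst assoc_mult_mat[OF mult_carrier_mat[OF Xc A] AT YT]) simp
  also have "\<dots> = (X * A) * (Y * A) * Y" using ATYT by simp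
  also have "\<dots> = (X * A) * ((Y * A) * Y)"
    by (subst assoc_mult_mat[OF mult_carrier_mat[OF Xc A] mult_carrier_mat[OF Yc A] Yc]) simp
  also have "\<dots> = X * A * Y" using Y1 by simp
  finally show ?thesis using eq1 by simp
qed

lemma pinv_eq: assumes A: "A \<in> carrier_mat a b" and X: "penrose A X" shows "pinv A = X"
  unfolding pinv_def
proof (rule the_equality)
  show "X \<in> carrier_mat (dim_col A) (dim_row A) \<and> A * X * A = A \<and> X * A * X = X \<and>
      transpose_mat (A * X) = A * X \<and> transpose_mat (X * A) = X * A"
    using X unfolding penrose_def by blast
  fix Y assume "Y \<in> carrier_mat (dim_col A) (dim_row A) \<and> A * Y * A = A \<and> Y * A * Y = Y \<and>
      transpose_mat (A * Y) = A * Y \<and> transpose_mat (Y * A) = Y * A"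
  hence "penrose A Y" unfolding penrose_def by blast
  thus "Y = X" using penrose_unique[OF A X] by simp
qed

definition dinv :: "real mat \<Rightarrow> real mat" where
  "dinv S = mat (dim_row S) (dim_row S) (\<lambda>(i,j). if i = j then 1 / S $$ (i,i) else 0)"

lemma dinv: assumes S: "S \<in> carrier_mat r r" and D: "diagonal_mat S" and P: "\<forall>i<r. 0 < S $$ (i,i)"
  shows "dinv S \<in> carrier_mat r r" "S * dinv S = 1\<^sub>m r" "dinv S * S = 1\<^sub>m r"
proof -
  show c: "dinv S \<in> carrier_mat r r" using S unfolding dinv_def by auto
  have Sij: "\<And>i j. i < r \<Longrightarrow> j < r \<Longrightarrow> i \<noteq> j \<Longrightarrow> S $$ (i,j) = 0"
    using D S unfolding diagonal_mat_def by auto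
  show "S * dinv S = 1\<^sub>m r"
  proof (rule eq_matI)
    fix i j assume ij: "i < dim_row (1\<^sub>m r)" "j < dim_col (1\<^sub>m r)"
    have "(S * dinv S) $$ (i,j) = (\<Sum>k\<in>{0..<r}. S $$ (i,k) * dinv S $$ (k,j))"
      using ij S c by (simp add: scalar_prod_def)
    also have "\<dots> = (\<Sum>k\<in>{0..<r}. if k = i then S $$ (i,i) * dinv S $$ (i,j) else 0)"
      by (rule sum.cong) (use ij Sij in auto)
    also have "\<dots> = S $$ (i,i) * dinv S $$ (i,j)" using ij by simp
    also have "\<dots> = 1\<^sub>m r $$ (i,j)" using ij P S by (auto simp: dinv_def)
    finally show "(S * dinv S) $$ (i,j) = 1\<^sub>m r $$ (i,j)" .
  qed (use S c in auto)
  show "dinv S * S = 1\<^sub>m r"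
  proof (rule eq_matI)
    fix i j assume ij: "i < dim_row (1\<^sub>m r)" "j < dim_col (1\<^sub>m r)"
    have "(dinv S * S) $$ (i,j) = (\<Sum>k\<in>{0..<r}. dinv S $$ (i,k) * S $$ (k,j))"
      using ij S c by (simp add: scalar_prod_def)
    also have "\<dots> = (\<Sum>k\<in>{0..<r}. if k = j then dinv S $$ (i,j) * S $$ (j,j) else 0)"
      by (rule sum.cong) (use ij Sij in auto)
    also have "\<dots> = dinv S $$ (i,j) * S $$ (j,j)" using ij by simp
    also have "\<dots> = 1\<^sub>m r $$ (i,j)" using ij P S by (auto simp: dinv_def)
    finally show "(dinv S * S) $$ (i,j) = 1\<^sub>m r $$ (i,j)" .
  qed (use S c in auto)
qed

lemma mult_unit_vec_col: assumes "(A::real mat) \<in> carrier_mat k n" "j < n"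
  shows "A *\<^sub>v unit_vec n j = col A j"
proof (rule eq_vecI)
  fix i assume "i < dim_vec (col A j)"
  hence i: "i < k" using assms by simp
  have "(A *\<^sub>v unit_vec n j) $ i = row A i \<bullet> unit_vec n j" using i assms by simp
  also have "\<dots> = row A i $ j" using assms(2) by (rule scalar_prod_right_unit)
  finally show "(A *\<^sub>v unit_vec n j) $ i = col A j $ i" using i assms by simp
qed (use assms in simp)

lemma card_J: assumes "J \<subseteq> {..<n}" shows "card {j. j < n \<and> j \<in> J} = card J"
proof -
  have "{j. j < n \<and> j \<in> J} = J" using assms by auto
  thus ?thesis by simp
qed

lemma card_UNIV_lt: "card {i. i < (m::nat) \<and> i \<in> UNIV} = m" by simp

lemma submatrix_mult_T: assumes A: "A \<in> carrier_mat m r" and B: "B \<in> carrier_mat n r"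
  and J: "J \<subseteq> {..<n}"
  shows "submatrix (A * transpose_mat B) UNIV J = A * transpose_mat (submatrix B J UNIV)"
proof (rule eq_matI)
  have d: "dim_row (submatrix B J UNIV) = card J" "dim_col (submatrix B J UNIV) = r"
    using B card_J[OF J] by (auto simp: dim_submatrix)
  show dr: "dim_row (submatrix (A * transpose_mat B) UNIV J) = dim_row (A * transpose_mat (submatrix B J UNIV))"
    using A B by (simp add: dim_submatrix)
  show dc: "dim_col (submatrix (A * transpose_mat B) UNIV J) = dim_col (A * transpose_mat (submatrix B J UNIV))"
    using A B d card_J[OF J] by (simp add: dim_submatrix)
  fix i j assume i: "i < dim_row (A * transpose_mat (submatrix B J UNIV))"
    and j: "j < dim_col (A * transpose_mat (submatrix B J UNIV))"
  have i': "i < m" and j': "j < card J" using i j A d by auto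
  have jc: "j < card {j. j < dim_row B \<and> j \<in> J}" using j' card_J[OF J] B by simp
  have pj: "pick J j < n" using pick_le[OF jc] B by simp
  have "submatrix (A * transpose_mat B) UNIV J $$ (i, j) = (A * transpose_mat B) $$ (i, pick J j)"
    using submatrix_index[of i "A * transpose_mat B" UNIV j J] i' jc A B by (simp add: pick_UNIV)
  also have "\<dots> = row A i \<bullet> row B (pick J j)" using i' pj A B by simp
  also have "row B (pick J j) = row (submatrix B J UNIV) j"
    using row_submatrix_UNIV[of j B J] jc by simp
  also have "row A i \<bullet> row (submatrix B J UNIV) j = (A * transpose_mat (submatrix B J UNIV)) $$ (i, j)"
    using i' j' A d by simp
  finally show "submatrix (A * transpose_mat B) UNIV J $$ (i, j) = (A * transpose_mat (submatrix B J UNIV)) $$ (i, j)" .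
qed




lemma assoc': "dim_col (A::real mat) = dim_row B \<Longrightarrow> dim_col B = dim_row C \<Longrightarrow> (A * B) * C = A * (B * C)"
  by (rule assoc_mult_mat[of A "dim_row A" "dim_col A" B "dim_col B" C "dim_col C"]) auto

lemma assoc_v': "dim_col (A::real mat) = dim_row B \<Longrightarrow> dim_col B = dim_vec v \<Longrightarrow> (A * B) *\<^sub>v v = A *\<^sub>v (B *\<^sub>v v)"
  by (rule assoc_mult_mat_vec[of A "dim_row A" "dim_col A" B "dim_col B" v]) auto

lemma cancel': assumes AB: "(A::real mat) * B = 1\<^sub>m n" and d1: "dim_col A = dim_row B" and d2: "dim_col B = dim_row D"
  shows "A * (B * D) = D"
proof -
  have "dim_col (A * B) = n" unfolding AB by simp
  hence n: "dim_row D = n" using d2 by simp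
  have "A * (B * D) = (A * B) * D" using assoc'[OF d1 d2] by (rule sym)
  also have "\<dots> = 1\<^sub>m n * D" unfolding AB ..
  also have "\<dots> = D" using n by (rule left_mult_one_mat')
  finally show ?thesis .
qed

lemma cancel_v': assumes AB: "(A::real mat) * B = 1\<^sub>m n" and d1: "dim_col A = dim_row B" and d2: "dim_col B = dim_vec v"
  shows "A *\<^sub>v (B *\<^sub>v v) = v"
proof -
  have "dim_col (A * B) = n" unfolding AB by simp
  hence "dim_vec v = n" using d2 by simp
  hence n: "v \<in> carrier_vec n" by (rule carrier_vecI)
  have "A *\<^sub>v (B *\<^sub>v v) = (A * B) *\<^sub>v v" using assoc_v'[OF d1 d2] by (rule sym)
  also have "\<dots> = 1\<^sub>m n *\<^sub>v v" unfolding AB ..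
  also have "\<dots> = v" using n by (rule one_mult_mat_vec)
  finally show ?thesis .
qed

lemma svd_gen:
  fixes A W S Si V :: "real mat"
  assumes W: "W \<in> carrier_mat p r" and S: "S \<in> carrier_mat r r" and Si: "Si \<in> carrier_mat r r"
    and V: "V \<in> carrier_mat q r" and WW: "transpose_mat W * W = 1\<^sub>m r" and VV: "transpose_mat V * V = 1\<^sub>m r"
    and SSi: "S * Si = 1\<^sub>m r" and SiS: "Si * S = 1\<^sub>m r" and A: "A = W * S * transpose_mat V"
  shows "pinv A = V * Si * transpose_mat W" "pinv A * A = V * transpose_mat V"
    "\<And>w. w \<in> carrier_vec r \<Longrightarrow> vnorm (S *\<^sub>v w) \<le> spec_norm A * vnorm w"
    "\<And>w. w \<in> carrier_vec r \<Longrightarrow> vnorm (Si *\<^sub>v w) \<le> spec_norm (pinv A) * vnorm w"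
proof -
  have WT: "transpose_mat W \<in> carrier_mat r p" and VT: "transpose_mat V \<in> carrier_mat r q"
    using W V by auto
  note c = W S Si V WT VT
  have d: "dim_row W = p" "dim_col W = r" "dim_row S = r" "dim_col S = r" "dim_row Si = r" "dim_col Si = r"
    "dim_row V = q" "dim_col V = r" using c by auto
  have Ac: "A \<in> carrier_mat p q" using A c by simp
  let ?X = "V * Si * transpose_mat W"
  have AX: "A * ?X = W * transpose_mat W"
  proof -
    have "A * ?X = W * S * (transpose_mat V * V) * Si * transpose_mat W"
      unfolding A using c by (simp add: d assoc' assoc_v' cancel'[OF WW] cancel'[OF VV] cancel'[OF SSi] cancel'[OF SiS] cancel_v'[OF WW] cancel_v'[OF VV] cancel_v'[OF SSi] cancel_v'[OF SiS])
    also have "\<dots> = W * transpose_mat W" using c SSi VV by (simp add: d assoc' assoc_v' cancel'[OF WW] cancel'[OF VV] cancel'[OF SSi] cancel'[OF SiS] cancel_v'[OF WW] cancel_v'[OF VV] cancel_v'[OF SSi] cancel_v'[OF SiS])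
    finally show ?thesis .
  qed
  have XA: "?X * A = V * transpose_mat V"
  proof -
    have "?X * A = V * Si * (transpose_mat W * W) * S * transpose_mat V"
      unfolding A using c by (simp add: d assoc' assoc_v' cancel'[OF WW] cancel'[OF VV] cancel'[OF SSi] cancel'[OF SiS] cancel_v'[OF WW] cancel_v'[OF VV] cancel_v'[OF SSi] cancel_v'[OF SiS])
    also have "\<dots> = V * transpose_mat V" using c SiS WW by (simp add: d assoc' assoc_v' cancel'[OF WW] cancel'[OF VV] cancel'[OF SSi] cancel'[OF SiS] cancel_v'[OF WW] cancel_v'[OF VV] cancel_v'[OF SSi] cancel_v'[OF SiS])
    finally show ?thesis .
  qed
  have P: "penrose A ?X"
    unfolding penrose_def
  proof (intro conjI)
    show "?X \<in> carrier_mat (dim_col A) (dim_row A)" using Ac c by simp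
    show "A * ?X * A = A" unfolding AX unfolding A using c WW by (simp add: d assoc' assoc_v' cancel'[OF WW] cancel'[OF VV] cancel'[OF SSi] cancel'[OF SiS] cancel_v'[OF WW] cancel_v'[OF VV] cancel_v'[OF SSi] cancel_v'[OF SiS])
    show "?X * A * ?X = ?X" unfolding XA using c VV by (simp add: d assoc' assoc_v' cancel'[OF WW] cancel'[OF VV] cancel'[OF SSi] cancel'[OF SiS] cancel_v'[OF WW] cancel_v'[OF VV] cancel_v'[OF SSi] cancel_v'[OF SiS])
    show "transpose_mat (A * ?X) = A * ?X" unfolding AX using c by (simp add: transpose_mult)
    show "transpose_mat (?X * A) = ?X * A" unfolding XA using c by (simp add: transpose_mult)
  qed
  show pA: "pinv A = ?X" by (rule pinv_eq[OF Ac P])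
  show "pinv A * A = V * transpose_mat V" unfolding pA XA ..
  fix w :: "real vec" assume w: "w \<in> carrier_vec r"
  {
    have "A *\<^sub>v (V *\<^sub>v w) = W *\<^sub>v (S *\<^sub>v w)"
      unfolding A using c w VV by (simp add: d assoc' assoc_v' cancel'[OF WW] cancel'[OF VV] cancel'[OF SSi] cancel'[OF SiS] cancel_v'[OF WW] cancel_v'[OF VV] cancel_v'[OF SSi] cancel_v'[OF SiS])
    hence "vnorm (S *\<^sub>v w) = vnorm (A *\<^sub>v (V *\<^sub>v w))" using orth_vnorm[OF W WW] S w by simp
    also have "\<dots> \<le> spec_norm A * vnorm (V *\<^sub>v w)" by (rule spec_norm_le) (use Ac V w in simp)
    also have "vnorm (V *\<^sub>v w) = vnorm w" by (rule orth_vnorm[OF V VV w])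
    finally show "vnorm (S *\<^sub>v w) \<le> spec_norm A * vnorm w" .
  }
  {
    have "pinv A *\<^sub>v (W *\<^sub>v w) = V *\<^sub>v (Si *\<^sub>v w)"
      unfolding pA using c w WW by (simp add: d assoc' assoc_v' cancel'[OF WW] cancel'[OF VV] cancel'[OF SSi] cancel'[OF SiS] cancel_v'[OF WW] cancel_v'[OF VV] cancel_v'[OF SSi] cancel_v'[OF SiS])
    hence "vnorm (Si *\<^sub>v w) = vnorm (pinv A *\<^sub>v (W *\<^sub>v w))" using orth_vnorm[OF V VV] Si w by simp
    also have "\<dots> \<le> spec_norm (pinv A) * vnorm (W *\<^sub>v w)" by (rule spec_norm_le) (use pA c w in simp)
    also have "vnorm (W *\<^sub>v w) = vnorm w" by (rule orth_vnorm[OF W WW w])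
    finally show "vnorm (Si *\<^sub>v w) \<le> spec_norm (pinv A) * vnorm w" .
  }
qed




lemma diag_T: assumes "S \<in> carrier_mat r r" "diagonal_mat S" shows "transpose_mat S = S"
proof (rule eq_matI)
  fix i j assume ij: "i < dim_row S" "j < dim_col S"
  show "transpose_mat S $$ (i, j) = S $$ (i, j)"
  proof (cases "i = j")
    case False thus ?thesis using assms ij unfolding diagonal_mat_def by auto
  qed (use ij assms in auto)
qed (use assms in auto)

lemma frob2_alt: "frob2 A = (\<Sum>i<dim_row A. \<Sum>j<dim_col A. (A $$ (i,j))^2)"
  unfolding frob2_def vnorm_def by (intro sum.cong refl) (simp add: sum_nonneg)

lemma frob2_T: "frob2 (transpose_mat A) = frob2 A"
  unfolding frob2_alt by (simp add: sum.swap[of _ "{..<dim_row A}"])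

lemma transpose3: "dim_col (A::real mat) = dim_row B \<Longrightarrow> dim_col B = dim_row C \<Longrightarrow>
   transpose_mat (A * B * C) = transpose_mat C * (transpose_mat B * transpose_mat A)"
  by (subst transpose_mult[of _ "dim_row A" "dim_col B"], auto,
      subst transpose_mult[of _ "dim_row A" "dim_col A"], auto)

theorem theorem3p1:
  fixes L WL SL VL WC SC VC :: "real mat" and m n r :: nat and J :: "nat set"
    and mu1 mu2 beta :: real
  assumes L_dim: "L \<in> carrier_mat m n"
    and L_rank: "vec_space.rank m L = r"
    and L_svd: "compact_svd L r WL SL VL"
    and inc1: "\<forall>i<m. vnorm (transpose_mat WL *\<^sub>v unit_vec m i) \<le> sqrt (mu1 * r / m)"
    and inc2: "\<forall>i<n. vnorm (transpose_mat VL *\<^sub>v unit_vec n i) \<le> sqrt (mu2 * r / n)"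
    and J_sub: "J \<subseteq> {..<n}"
    and C_rank: "vec_space.rank m (submatrix L UNIV J) = r"
    and C_svd: "compact_svd (submatrix L UNIV J) r WC SC VC"
    and beta_def: "beta = sqrt (real (card J) / n) * spec_norm (pinv (submatrix VL J UNIV))"
  shows "(\<forall>i<m. vnorm (transpose_mat WC *\<^sub>v unit_vec m i) \<le> sqrt (mu1 * r / m))
       \<and> (\<forall>i<card J. vnorm (transpose_mat VC *\<^sub>v unit_vec (card J) i)
              \<le> beta * cond_num L * sqrt (mu2 * r / card J))
       \<and> cond_num (submatrix L UNIV J) \<le> beta * sqrt (mu2 * r) * cond_num L"
proof -
  define C where "C = submatrix L UNIV J"
  define VJ where "VJ = submatrix VL J UNIV"
  define k where "k = card J"
  have WL: "WL \<in> carrier_mat m r" and SL: "SL \<in> carrier_mat r r" and VL: "VL \<in> carrier_mat n r"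
    and WLo: "transpose_mat WL * WL = 1\<^sub>m r" and VLo: "transpose_mat VL * VL = 1\<^sub>m r"
    and SLd: "diagonal_mat SL" and SLp: "\<forall>i<r. 0 < SL $$ (i,i)"
    and Ldef: "L = WL * SL * transpose_mat VL"
    using L_svd L_dim unfolding compact_svd_def by auto
  have dimC: "dim_row C = m" "dim_col C = k"
    unfolding C_def k_def using L_dim card_J[OF J_sub] by (auto simp: dim_submatrix)
  have WC: "WC \<in> carrier_mat m r" and SC: "SC \<in> carrier_mat r r" and VC: "VC \<in> carrier_mat k r"
    and WCo: "transpose_mat WC * WC = 1\<^sub>m r" and VCo: "transpose_mat VC * VC = 1\<^sub>m r"
    and SCd: "diagonal_mat SC" and SCp: "\<forall>i<r. 0 < SC $$ (i,i)"
    and Cdef: "C = WC * SC * transpose_mat VC"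
    using C_svd dimC unfolding compact_svd_def C_def[symmetric] by auto
  have VJ: "VJ \<in> carrier_mat k r"
    unfolding VJ_def k_def using VL card_J[OF J_sub] by (auto simp: dim_submatrix)
  have Cdef2: "C = WL * SL * transpose_mat VJ"
    unfolding C_def VJ_def Ldef by (rule submatrix_mult_T[OF mult_carrier_mat[OF WL SL] VL J_sub])
  define SLi where "SLi = dinv SL"
  define SCi where "SCi = dinv SC"
  have SLi: "SLi \<in> carrier_mat r r" "SL * SLi = 1\<^sub>m r" "SLi * SL = 1\<^sub>m r"
    using dinv[OF SL SLd SLp] unfolding SLi_def by auto
  have SCi: "SCi \<in> carrier_mat r r" "SC * SCi = 1\<^sub>m r" "SCi * SC = 1\<^sub>m r"
    using dinv[OF SC SCd SCp] unfolding SCi_def by auto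
  have SLT: "transpose_mat SL = SL" by (rule diag_T[OF SL SLd])
  have SCT: "transpose_mat SC = SC" by (rule diag_T[OF SC SCd])
  define N where "N = SL * transpose_mat VJ * VC * SCi"
  have d: "dim_row WL = m" "dim_col WL = r" "dim_row SL = r" "dim_col SL = r" "dim_row VL = n" "dim_col VL = r"
     "dim_row WC = m" "dim_col WC = r" "dim_row SC = r" "dim_col SC = r" "dim_row VC = k" "dim_col VC = r"
     "dim_row VJ = k" "dim_col VJ = r" "dim_row SLi = r" "dim_col SLi = r" "dim_row SCi = r" "dim_col SCi = r"
    using WL SL VL WC SC VC VJ SLi SCi by auto
  have dN: "dim_row N = r" "dim_col N = r" unfolding N_def using d by auto
  note simps = d dN assoc' assoc_v' cancel'[OF WLo] cancel'[OF VLo] cancel'[OF WCo] cancel'[OF VCo]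
    cancel'[OF SLi(2)] cancel'[OF SLi(3)] cancel'[OF SCi(2)] cancel'[OF SCi(3)]
    cancel_v'[OF WLo] cancel_v'[OF VLo] cancel_v'[OF WCo] cancel_v'[OF VCo]
    cancel_v'[OF SLi(2)] cancel_v'[OF SLi(3)] cancel_v'[OF SCi(2)] cancel_v'[OF SCi(3)]
    SLi(2,3) SCi(2,3) WLo VLo WCo VCo
  have NTc: "transpose_mat N \<in> carrier_mat r r" and Nc: "N \<in> carrier_mat r r"
    using dN by (auto intro: carrier_matI)
  have WCN: "WC = WL * N"
  proof -
    have "C * VC * SCi = WC" unfolding Cdef by (simp add: simps)
    moreover have "C * VC * SCi = WL * N" unfolding Cdef2 N_def by (simp add: simps)
    ultimately show ?thesis by simp
  qed
  have NTN: "transpose_mat N * N = 1\<^sub>m r"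
  proof -
    have "transpose_mat N * N = transpose_mat N * (transpose_mat WL * (WL * N))" by (simp add: simps)
    also have "\<dots> = transpose_mat (WL * N) * (WL * N)"
      using transpose_mult[OF WL Nc] by (simp add: simps)
    also have "\<dots> = 1\<^sub>m r" using WCN WCo by simp
    finally show ?thesis .
  qed
  have NNT: "N * transpose_mat N = 1\<^sub>m r"
    by (rule mat_mult_left_right_inverse[OF NTc Nc NTN])
  note simps = simps cancel'[OF NTN] cancel'[OF NNT] cancel_v'[OF NTN] cancel_v'[OF NNT] NTN NNT
  have CT1: "transpose_mat C = VC * (SC * transpose_mat WC)"
    unfolding Cdef by (subst transpose3) (use d SCT in simp_all)
  have CT2: "transpose_mat C = VJ * (SL * transpose_mat WL)"
    unfolding Cdef2 by (subst transpose3) (use d SLT in simp_all)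
  have E1: "VC * SC = VJ * (SL * N)"
  proof -
    have "VC * SC = transpose_mat C * WC" unfolding CT1 by (simp add: simps)
    also have "\<dots> = VJ * (SL * N)" unfolding CT2 WCN by (simp add: simps)
    finally show ?thesis .
  qed
  have E2: "SC * transpose_mat VC = transpose_mat N * (SL * transpose_mat VJ)"
  proof -
    have "transpose_mat (VC * SC) = transpose_mat (VJ * SL * N)" using E1 by (simp add: simps)
    thus ?thesis by (subst (asm) transpose3) (use d dN SLT SCT transpose_mult[OF VC SC] in simp_all)
  qed
  have VCT: "transpose_mat VC = SCi * (transpose_mat N * (SL * transpose_mat VJ))"
  proof -
    have "transpose_mat VC = SCi * (SC * transpose_mat VC)" by (simp add: simps)
    thus ?thesis unfolding E2 .
  qed
  have WCT: "transpose_mat WC = transpose_mat N * transpose_mat WL"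
    unfolding WCN by (rule transpose_mult[OF WL Nc])
  have NTo: "transpose_mat (transpose_mat N) * transpose_mat N = 1\<^sub>m r" using NNT by simp
  have P1: "\<forall>i<m. vnorm (transpose_mat WC *\<^sub>v unit_vec m i) \<le> sqrt (mu1 * r / m)"
  proof (intro allI impI)
    fix i assume i: "i < m"
    have "transpose_mat WC *\<^sub>v unit_vec m i = transpose_mat N *\<^sub>v (transpose_mat WL *\<^sub>v unit_vec m i)"
      unfolding WCT by (simp add: simps)
    hence "vnorm (transpose_mat WC *\<^sub>v unit_vec m i) = vnorm (transpose_mat WL *\<^sub>v unit_vec m i)"
      using orth_vnorm[OF NTc NTo, of "transpose_mat WL *\<^sub>v unit_vec m i"] WL by simp
    thus "vnorm (transpose_mat WC *\<^sub>v unit_vec m i) \<le> sqrt (mu1 * r / m)" using inc1 i by simp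
  qed
  define sL where "sL = spec_norm L"
  define pL where "pL = spec_norm (pinv L)"
  define pJ where "pJ = spec_norm (pinv VJ)"
  have sL0: "0 \<le> sL" and pL0: "0 \<le> pL" and pJ0: "0 \<le> pJ"
    unfolding sL_def pL_def pJ_def by (auto simp: spec_norm_nonneg)
  note svdL = svd_gen[OF WL SL SLi(1) VL WLo VLo SLi(2,3) Ldef]
  have LS: "\<And>w. w \<in> carrier_vec r \<Longrightarrow> vnorm (SL *\<^sub>v w) \<le> sL * vnorm w" using svdL(3) unfolding sL_def .
  have LSi: "\<And>w. w \<in> carrier_vec r \<Longrightarrow> vnorm (SLi *\<^sub>v w) \<le> pL * vnorm w" using svdL(4) unfolding pL_def .
  define M where "M = SC * (transpose_mat N * SLi)"
  define Mi where "Mi = SL * (N * SCi)"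
  have Mc: "M \<in> carrier_mat r r" "Mi \<in> carrier_mat r r" unfolding M_def Mi_def using SC NTc SLi(1) SL Nc SCi(1) by auto
  have MMi: "M * Mi = 1\<^sub>m r" unfolding M_def Mi_def by (simp add: simps)
  have MiM: "Mi * M = 1\<^sub>m r" unfolding M_def Mi_def by (simp add: simps)
  have VJM: "VJ = VC * M * transpose_mat (1\<^sub>m r)"
  proof -
    have "VC * M = VC * SC * (transpose_mat N * SLi)" unfolding M_def by (simp add: simps)
    also have "\<dots> = VJ" unfolding E1 by (simp add: simps)
    finally show ?thesis using d Mc by simp
  qed
  note svdJ = svd_gen[OF VC Mc(1) Mc(2) one_carrier_mat VCo _ MMi MiM VJM]
  have pJJ: "pinv VJ * VJ = 1\<^sub>m r" using svdJ(2) by simp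
  have pJc: "pinv VJ \<in> carrier_mat r k" using svdJ(1) Mc VC by simp
  have PJ: "\<And>w. w \<in> carrier_vec r \<Longrightarrow> vnorm w \<le> pJ * vnorm (VJ *\<^sub>v w)"
  proof -
    fix w :: "real vec" assume w: "w \<in> carrier_vec r"
    have "w = pinv VJ *\<^sub>v (VJ *\<^sub>v w)" using pJJ pJc VJ w by (metis assoc_mult_mat_vec one_mult_mat_vec)
    hence "vnorm w = vnorm (pinv VJ *\<^sub>v (VJ *\<^sub>v w))" by simp
    also have "\<dots> \<le> pJ * vnorm (VJ *\<^sub>v w)" unfolding pJ_def by (rule spec_norm_le) (use pJc VJ w in simp)
    finally show "vnorm w \<le> pJ * vnorm (VJ *\<^sub>v w)" .
  qed
  have KB: "\<And>x. x \<in> carrier_vec r \<Longrightarrow> vnorm (SCi *\<^sub>v x) \<le> pL * pJ * vnorm x"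
  proof -
    fix x :: "real vec" assume x: "x \<in> carrier_vec r"
    define v where "v = SCi *\<^sub>v x"
    have v: "v \<in> carrier_vec r" unfolding v_def using SCi x by simp
    have Nv: "N *\<^sub>v v \<in> carrier_vec r" using v Nc by simp
    have SNv: "SL *\<^sub>v (N *\<^sub>v v) \<in> carrier_vec r" using Nv SL by simp
    have x1: "vnorm x = vnorm (VJ *\<^sub>v (SL *\<^sub>v (N *\<^sub>v v)))"
    proof -
      have "x = SC *\<^sub>v v" unfolding v_def using cancel_v'[OF SCi(2), of x] d x by simp
      moreover have "vnorm (VC *\<^sub>v (SC *\<^sub>v v)) = vnorm (SC *\<^sub>v v)"
        by (rule orth_vnorm[OF VC VCo]) (use SC v in simp)
      ultimately have "vnorm x = vnorm (VC *\<^sub>v (SC *\<^sub>v v))" by simp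
      also have "VC *\<^sub>v (SC *\<^sub>v v) = (VC * SC) *\<^sub>v v" by (rule assoc_mult_mat_vec[OF VC SC v, symmetric])
      also have "\<dots> = VJ *\<^sub>v (SL *\<^sub>v (N *\<^sub>v v))" unfolding E1
        using assoc_mult_mat_vec[OF VJ mult_carrier_mat[OF SL Nc] v] assoc_mult_mat_vec[OF SL Nc v] by simp
      finally show ?thesis .
    qed
    have "vnorm v = vnorm (N *\<^sub>v v)" using orth_vnorm[OF Nc NTN v] by simp
    also have "N *\<^sub>v v = SLi *\<^sub>v (SL *\<^sub>v (N *\<^sub>v v))" using cancel_v'[OF SLi(3), of "N *\<^sub>v v"] d dN Nv by simp
    also have "vnorm \<dots> \<le> pL * vnorm (SL *\<^sub>v (N *\<^sub>v v))" by (rule LSi[OF SNv])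
    also have "\<dots> \<le> pL * (pJ * vnorm x)" unfolding x1 by (rule mult_left_mono[OF PJ[OF SNv] pL0])
    finally show "vnorm (SCi *\<^sub>v x) \<le> pL * pJ * vnorm x" unfolding v_def by (simp add: mult.assoc)
  qed
  have rowVJ: "\<And>i. i < k \<Longrightarrow> transpose_mat VJ *\<^sub>v unit_vec k i = transpose_mat VL *\<^sub>v unit_vec n (pick J i)"
  proof -
    fix i assume i: "i < k"
    have ic: "i < card {j. j < dim_row VL \<and> j \<in> J}" using i card_J[OF J_sub] d unfolding k_def by simp
    have pi: "pick J i < n" using pick_le[OF ic] d by simp
    have "transpose_mat VJ *\<^sub>v unit_vec k i = col (transpose_mat VJ) i"
      by (rule mult_unit_vec_col[OF _ i]) (use VJ in simp)
    also have "\<dots> = row VJ i" using i d by simp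
    also have "\<dots> = row VL (pick J i)" unfolding VJ_def by (rule row_submatrix_UNIV[OF ic])
    also have "\<dots> = col (transpose_mat VL) (pick J i)" using pi d by simp
    also have "\<dots> = transpose_mat VL *\<^sub>v unit_vec n (pick J i)"
      by (rule mult_unit_vec_col[symmetric, OF _ pi]) (use VL in simp)
    finally show "transpose_mat VJ *\<^sub>v unit_vec k i = transpose_mat VL *\<^sub>v unit_vec n (pick J i)" .
  qed
  have rowb: "\<And>i. i < k \<Longrightarrow> vnorm (transpose_mat VJ *\<^sub>v unit_vec k i) \<le> sqrt (mu2 * r / n)"
  proof -
    fix i assume i: "i < k"
    have ic: "i < card {j. j < dim_row VL \<and> j \<in> J}" using i card_J[OF J_sub] d unfolding k_def by simp
    have pi: "pick J i < n" using pick_le[OF ic] d by simp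
    show "vnorm (transpose_mat VJ *\<^sub>v unit_vec k i) \<le> sqrt (mu2 * r / n)"
      unfolding rowVJ[OF i] using inc2 pi by simp
  qed
  have P2: "\<forall>i<k. vnorm (transpose_mat VC *\<^sub>v unit_vec k i) \<le> beta * (sL * pL) * sqrt (mu2 * r / k)"
  proof (intro allI impI)
    fix i assume i: "i < k"
    let ?u = "transpose_mat VJ *\<^sub>v unit_vec k i"
    have u: "?u \<in> carrier_vec r" using VJ by simp
    have su: "SL *\<^sub>v ?u \<in> carrier_vec r" using u SL by simp
    have ntsu: "transpose_mat N *\<^sub>v (SL *\<^sub>v ?u) \<in> carrier_vec r" using su NTc by simp
    have "transpose_mat VC *\<^sub>v unit_vec k i = SCi *\<^sub>v (transpose_mat N *\<^sub>v (SL *\<^sub>v ?u))"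
      unfolding VCT by (simp add: simps)
    hence "vnorm (transpose_mat VC *\<^sub>v unit_vec k i) \<le> pL * pJ * vnorm (transpose_mat N *\<^sub>v (SL *\<^sub>v ?u))"
      using KB[OF ntsu] by simp
    also have "vnorm (transpose_mat N *\<^sub>v (SL *\<^sub>v ?u)) = vnorm (SL *\<^sub>v ?u)" by (rule orth_vnorm[OF NTc NTo su])
    also have "pL * pJ * vnorm (SL *\<^sub>v ?u) \<le> pL * pJ * (sL * sqrt (mu2 * r / n))"
    proof (rule mult_left_mono)
      show "vnorm (SL *\<^sub>v ?u) \<le> sL * sqrt (mu2 * r / n)"
        using LS[OF u] mult_left_mono[OF rowb[OF i] sL0] by linarith
    qed (use pL0 pJ0 in simp)
    also have "\<dots> = beta * (sL * pL) * sqrt (mu2 * r / k)"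
    proof -
      have k0: "real k > 0" using i by simp
      have "sqrt (real k / n) * sqrt (mu2 * r / k) = sqrt (mu2 * r / n)"
        unfolding real_sqrt_mult[symmetric] using k0 by (simp add: field_simps)
      thus ?thesis unfolding beta_def k_def[symmetric] VJ_def[symmetric] pJ_def[symmetric]
        by (metis (no_types, lifting) mult.assoc mult.commute mult.left_commute)
    qed
    finally show "vnorm (transpose_mat VC *\<^sub>v unit_vec k i) \<le> beta * (sL * pL) * sqrt (mu2 * r / k)" .
  qed
  note svdC = svd_gen[OF WC SC SCi(1) VC WCo VCo SCi(2,3) Cdef]
  have pC: "spec_norm (pinv C) \<le> pL * pJ"
  proof (rule spec_norm_leI)
    show "0 \<le> pL * pJ" using pL0 pJ0 by simp
    fix x :: "real vec" assume "x \<in> carrier_vec (dim_col (pinv C))"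
    hence x: "x \<in> carrier_vec m" unfolding svdC(1) using d by simp
    have wx: "transpose_mat WC *\<^sub>v x \<in> carrier_vec r" using x WC by simp
    have swx: "SCi *\<^sub>v (transpose_mat WC *\<^sub>v x) \<in> carrier_vec r" using wx SCi by simp
    have "pinv C *\<^sub>v x = VC *\<^sub>v (SCi *\<^sub>v (transpose_mat WC *\<^sub>v x))" unfolding svdC(1) using x
      by (simp add: simps)
    hence "vnorm (pinv C *\<^sub>v x) = vnorm (SCi *\<^sub>v (transpose_mat WC *\<^sub>v x))"
      using orth_vnorm[OF VC VCo swx] by simp
    also have "\<dots> \<le> pL * pJ * vnorm (transpose_mat WC *\<^sub>v x)" by (rule KB[OF wx])
    also have "\<dots> \<le> pL * pJ * vnorm x"
      by (rule mult_left_mono[OF orth_T_le[OF WC WCo x]]) (use pL0 pJ0 in simp)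
    finally show "vnorm (pinv C *\<^sub>v x) \<le> pL * pJ * vnorm x" .
  qed
  have fro: "frob2 (transpose_mat VJ) \<le> k * (mu2 * r / n)"
  proof -
    have "frob2 (transpose_mat VJ) = frob2 VJ" by (rule frob2_T)
    also have "\<dots> = (\<Sum>i<k. (vnorm (row VJ i))^2)" unfolding frob2_def using d by simp
    also have "\<dots> \<le> (\<Sum>i<k. mu2 * r / n)"
    proof (rule sum_mono)
      fix i assume "i \<in> {..<k}"
      hence i: "i < k" by simp
      have "row VJ i = transpose_mat VJ *\<^sub>v unit_vec k i"
        using mult_unit_vec_col[of "transpose_mat VJ" r k i] VJ i by simp
      hence b: "vnorm (row VJ i) \<le> sqrt (mu2 * r / n)" using rowb[OF i] by simp
      hence "0 \<le> sqrt (mu2 * r / n)" using vnorm_nonneg order_trans by blast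
      hence t: "0 \<le> mu2 * r / n" by simp
      have "(vnorm (row VJ i))^2 \<le> (sqrt (mu2 * r / n))^2" by (rule power_mono[OF b vnorm_nonneg])
      thus "(vnorm (row VJ i))^2 \<le> mu2 * r / n" using t by simp
    qed
    finally show ?thesis by simp
  qed
  have sCnn: "0 \<le> sL * sqrt (k * (mu2 * r / n))"
      using sL0 frob2_nonneg[of "transpose_mat VJ"] fro by simp
  have sC: "spec_norm C \<le> sL * sqrt (k * (mu2 * r / n))"
  proof (rule spec_norm_leI)
    show "0 \<le> sL * sqrt (k * (mu2 * r / n))" by (rule sCnn)
    fix x :: "real vec" assume "x \<in> carrier_vec (dim_col C)"
    hence x: "x \<in> carrier_vec k" using dimC by simp
    have vx: "transpose_mat VJ *\<^sub>v x \<in> carrier_vec r" using x VJ by simp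
    have svx: "SL *\<^sub>v (transpose_mat VJ *\<^sub>v x) \<in> carrier_vec r" using vx SL by simp
    have "C *\<^sub>v x = WL *\<^sub>v (SL *\<^sub>v (transpose_mat VJ *\<^sub>v x))" unfolding Cdef2 using x by (simp add: simps)
    hence "vnorm (C *\<^sub>v x) = vnorm (SL *\<^sub>v (transpose_mat VJ *\<^sub>v x))" using orth_vnorm[OF WL WLo svx] by simp
    also have "\<dots> \<le> sL * vnorm (transpose_mat VJ *\<^sub>v x)" by (rule LS[OF vx])
    also have "\<dots> \<le> sL * (sqrt (frob2 (transpose_mat VJ)) * vnorm x)"
      by (rule mult_left_mono[OF vnorm_mult_le sL0]) (use x VJ in simp)
    also have "\<dots> \<le> sL * (sqrt (k * (mu2 * r / n)) * vnorm x)"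
      by (intro mult_left_mono mult_right_mono real_sqrt_le_mono fro sL0 vnorm_nonneg)
    finally show "vnorm (C *\<^sub>v x) \<le> sL * sqrt (k * (mu2 * r / n)) * vnorm x" by (simp add: mult.assoc)
  qed
  have P3: "cond_num C \<le> beta * sqrt (mu2 * r) * (sL * pL)"
  proof -
    have "cond_num C \<le> sL * sqrt (k * (mu2 * r / n)) * (pL * pJ)"
      unfolding cond_num_def
      by (rule mult_mono[OF sC pC sCnn spec_norm_nonneg])
    also have "\<dots> = beta * sqrt (mu2 * r) * (sL * pL)"
    proof -
      have "sqrt (real k / n) * sqrt (mu2 * r) = sqrt (k * (mu2 * r / n))"
        unfolding real_sqrt_mult[symmetric] by (simp add: field_simps)
      thus ?thesis unfolding beta_def k_def[symmetric] VJ_def[symmetric] pJ_def[symmetric]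
        by (metis (no_types, lifting) mult.assoc mult.commute mult.left_commute)
    qed
    finally show ?thesis .
  qed
  show ?thesis using P1 P2 P3 unfolding C_def[symmetric] k_def[symmetric] cond_num_def[of L] sL_def[symmetric] pL_def[symmetric]
    by simp
qed


end
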